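(* Let $S$ be an entropy function for a finite set $X$, let $X'\subset X$, and let $S'$ be the restriction of $S$ to subsets of $X'$. Then $F_{S'}$ equals the image of $F_S$ under the coordinate projection $\mathbb R^X\to\mathbb R^{X'}$.
   Context: An entropy function for a finite set $X$ is a function $S:2^X\to[0,\infty)$ with $S(\emptyset)=0$, $S(A)+S(B)\ge S(A\cap B)+S(A\cup B)$ and $S(A)+S(B)\ge S(A\setminus B)+S(B\setminus A)$ for all $A,B\subseteq X$. An entanglement distribution function (EDF) for $S$ is a function $f:X\to\mathbb R$ (a vector in $\mathbb R^X$) with $\big|\sum_{x\in A}f(x)\big|\le S(A)$ for all $A\subseteq X$; $F_S\subseteq\mathbb R^X$ denotes the set of all EDFs for $S$ (the entropohedron). *)

theory Defs
  imports "HOL-Analysis.Analysis"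
begin

definition entropy_function :: "'a set \<Rightarrow> ('a set \<Rightarrow> real) \<Rightarrow> bool" where
  "entropy_function X S \<longleftrightarrow> finite X \<and> S {} = 0 \<and>
     (\<forall>A. A \<subseteq> X \<longrightarrow> S A \<ge> 0) \<and>
     (\<forall>A B. A \<subseteq> X \<longrightarrow> B \<subseteq> X \<longrightarrow> S A + S B \<ge> S (A \<inter> B) + S (A \<union> B)) \<and>
     (\<forall>A B. A \<subseteq> X \<longrightarrow> B \<subseteq> X \<longrightarrow> S A + S B \<ge> S (A - B) + S (B - A))"

text \<open>Vectors in R^X are represented as functions 'a => real vanishing outside X
  (i.e. extensional functions on X). The entropohedron F_S:\<close>
definition entropohedron :: "'a set \<Rightarrow> ('a set \<Rightarrow> real) \<Rightarrow> ('a \<Rightarrow> real) set" where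
  "entropohedron X S = {f. (\<forall>x. x \<notin> X \<longrightarrow> f x = 0) \<and>
      (\<forall>A. A \<subseteq> X \<longrightarrow> \<bar>\<Sum>x\<in>A. f x\<bar> \<le> S A)}"

definition coord_proj :: "'a set \<Rightarrow> ('a \<Rightarrow> real) \<Rightarrow> ('a \<Rightarrow> real)" where
  "coord_proj X' f = (\<lambda>x. if x \<in> X' then f x else 0)"

end

theory Submission
  imports Defs
begin

lemma ext1:
  assumes E: "entropy_function X S" and Y: "Y \<subseteq> X" and z: "z \<in> X" "z \<notin> Y"
    and f: "f \<in> entropohedron Y S"
  shows "\<exists>g \<in> entropohedron (insert z Y) S. coord_proj Y g = f"
proof -
  have finX: "finite X" using E unfolding entropy_function_def by blast
  have finY: "finite Y" using finX Y finite_subset by blast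
  have sub: "\<And>A B. A \<subseteq> X \<Longrightarrow> B \<subseteq> X \<Longrightarrow> S A + S B \<ge> S (A - B) + S (B - A)"
    using E unfolding entropy_function_def by blast
  have f0: "\<And>x. x \<notin> Y \<Longrightarrow> f x = 0" and fA: "\<And>A. A \<subseteq> Y \<Longrightarrow> \<bar>sum f A\<bar> \<le> S A"
    using f unfolding entropohedron_def by auto
  define L where "L A = - S (insert z A) - sum f A" for A
  define t where "t = Max (L ` Pow Y)"
  have tge: "L B \<le> t" if "B \<subseteq> Y" for B
    unfolding t_def using that finY by (intro Max_ge) auto
  have key: "L C \<le> S (insert z B) - sum f B" if B: "B \<subseteq> Y" and C: "C \<subseteq> Y" for B C
  proof -
    have fB: "finite B" "finite C" using B C finY finite_subset by auto
    have e1: "sum f B = sum f (B - C) + sum f (B \<inter> C)"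
      using fB by (metis add.commute sum.Int_Diff)
    have e2: "sum f C = sum f (C - B) + sum f (B \<inter> C)"
      using fB by (metis add.commute sum.Int_Diff Int_commute)
    have a1: "\<bar>sum f (B - C)\<bar> \<le> S (B - C)" using B by (intro fA) auto
    have a2: "\<bar>sum f (C - B)\<bar> \<le> S (C - B)" using C by (intro fA) auto
    have s: "S (insert z B - insert z C) + S (insert z C - insert z B) \<le> S (insert z B) + S (insert z C)"
      using sub[of "insert z B" "insert z C"] B C Y z by auto
    have "insert z B - insert z C = B - C" "insert z C - insert z B = C - B" using B C z by auto
    with s have "S (B - C) + S (C - B) \<le> S (insert z B) + S (insert z C)" by simp
    then show ?thesis unfolding L_def using e1 e2 a1 a2 by linarith
  qed
  have tle: "t \<le> S (insert z B) - sum f B" if "B \<subseteq> Y" for B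
    unfolding t_def using finY that key by (subst Max_le_iff) auto
  define g where "g = f(z := t)"
  have "g \<in> entropohedron (insert z Y) S"
    unfolding entropohedron_def
  proof (intro CollectI conjI allI impI)
    fix x assume "x \<notin> insert z Y" then show "g x = 0" using f0 g_def by auto
  next
    fix A assume A: "A \<subseteq> insert z Y"
    show "\<bar>sum g A\<bar> \<le> S A"
    proof (cases "z \<in> A")
      case False
      then have "A \<subseteq> Y" using A by auto
      moreover have "sum g A = sum f A" using False g_def by (intro sum.cong) auto
      ultimately show ?thesis using fA by simp
    next
      case True
      define B where "B = A - {z}"
      have B: "B \<subseteq> Y" using A B_def by auto
      have finB: "finite B" using B finY finite_subset by auto
      have AB: "A = insert z B" using True B_def by auto
      have "sum g A = t + sum g B" proof -
        have "z \<notin> B" using B z by auto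
        then show ?thesis using AB finB by (simp add: g_def)
      qed
      also have "sum g B = sum f B" using B z g_def by (intro sum.cong) auto
      finally have "sum g A = t + sum f B" .
      moreover have "L B \<le> t" "t \<le> S (insert z B) - sum f B" using tge tle B by auto
      ultimately show ?thesis unfolding L_def AB by (simp add: abs_le_iff)
    qed
  qed
  moreover have "coord_proj Y g = f" unfolding coord_proj_def g_def using f0 z by (auto simp: fun_eq_iff)
  ultimately show ?thesis by blast
qed

lemma proj_id: "f \<in> entropohedron Y S \<Longrightarrow> coord_proj Y f = f"
  unfolding entropohedron_def coord_proj_def by (auto simp: fun_eq_iff)

lemma ext_many:
  assumes E: "entropy_function X S" and D: "finite D"
  shows "X' \<union> D \<subseteq> X \<Longrightarrow> f \<in> entropohedron X' S \<Longrightarrow>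
     \<exists>g \<in> entropohedron (X' \<union> D) S. coord_proj X' g = f"
  using D
proof (induction D rule: finite_induct)
  case empty
  then show ?case using proj_id by (metis Un_empty_right)
next
  case (insert z D)
  then obtain g where g: "g \<in> entropohedron (X' \<union> D) S" "coord_proj X' g = f" by auto
  show ?case
  proof (cases "z \<in> X' \<union> D")
    case True
    then have "X' \<union> insert z D = X' \<union> D" by auto
    then show ?thesis using g by auto
  next
    case False
    then obtain h where h: "h \<in> entropohedron (insert z (X' \<union> D)) S" "coord_proj (X' \<union> D) h = g"
      using ext1[OF E, of "X' \<union> D" z g] insert.prems g by auto
    have "coord_proj X' h = coord_proj X' g"
      using h(2) unfolding coord_proj_def by (auto simp: fun_eq_iff) metis
    then show ?thesis using h g by auto
  qed
qed

theorem corollary22: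
  fixes X X' :: "'a set" and S :: "'a set \<Rightarrow> real"
  assumes "entropy_function X S"
    and "X' \<subset> X"
  shows "entropohedron X' S = coord_proj X' ` entropohedron X S"
proof
  show "entropohedron X' S \<subseteq> coord_proj X' ` entropohedron X S"
  proof
    fix f assume f: "f \<in> entropohedron X' S"
    have fin: "finite (X - X')" using assms(1) unfolding entropy_function_def by auto
    have "X' \<union> (X - X') = X" using assms(2) by auto
    then show "f \<in> coord_proj X' ` entropohedron X S"
      using ext_many[OF assms(1) fin, of X' f] f by auto
  qed
next
  show "coord_proj X' ` entropohedron X S \<subseteq> entropohedron X' S"
  proof
    fix h assume "h \<in> coord_proj X' ` entropohedron X S"
    then obtain f where f: "f \<in> entropohedron X S" "h = coord_proj X' f" by auto
    have "\<bar>sum h A\<bar> \<le> S A" if A: "A \<subseteq> X'" for A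
    proof -
      have "sum h A = sum f A" using A f(2) unfolding coord_proj_def by (intro sum.cong) auto
      moreover have "A \<subseteq> X" using A assms(2) by auto
      ultimately show ?thesis using f(1) unfolding entropohedron_def by auto
    qed
    moreover have "\<And>x. x \<notin> X' \<Longrightarrow> h x = 0" using f(2) unfolding coord_proj_def by auto
    ultimately show "h \<in> entropohedron X' S" unfolding entropohedron_def by auto
  qed
qed

end
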